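(* Let $T:\mathbb{R}_+^N\to\mathbb{R}_{++}^N$ be a standard interference mapping, let $\|\cdot\|_a$ be a monotone norm on $\mathbb{R}^N$, and for each $\bar p>0$ let $(\mathbf{p}_{\bar p},c_{\bar p})$ be the unique solution of the problem described in the context, with $\lambda_{\bar p}:=1/c_{\bar p}$. Let $T_\infty$ be the asymptotic mapping of $T$. Then: (i) The limit $\lambda_\infty:=\lim_{\bar p\to\infty}\lambda_{\bar p}\ge 0$ exists. (ii) Assume in addition that $T$ is continuous. Let $(\bar p_n)_{n\in\mathbb{N}}\subset\mathbb{R}_{++}$ be any monotonically increasing sequence with $\bar p_n\to\infty$, and set $\mathbf{x}_n:=\mathbf{p}_{\bar p_n}/\|\mathbf{p}_{\bar p_n}\|_a$. If $\mathbf{x}_\infty\in\mathbb{R}_+^N$ is an accumulation point of the bounded sequence $(\mathbf{x}_n)_{n\in\mathbb{N}}$, then $(\mathbf{x}_\infty,\lambda_\infty)$ solves the problem: find $(\mathbf{x},\lambda)\in\mathbb{R}_+^N\times\mathbb{R}_+$ with $T_\infty(\mathbf{x})=\lambda\mathbf{x}$ and $\|\mathbf{x}\|_a=1$. (iii) Under the assumptions and notation of (ii), if the problem "find $(\mathbf{x},\lambda)\in\mathbb{R}_+^N\times\mathbb{R}_+$ with $T_\infty(\mathbf{x})=\lambda\mathbf{x}$ and $\|\mathbf{x}\|_a=1$" has a unique solution $(\mathbf{x}',\lambda')$, and it lies in $\mathbb{R}_{++}^N\times\mathbb{R}_{++}$, then $\lim_{n\to\infty}\mathbf{x}_n=\mathbf{x}'$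 (so $\mathbf{x}_\infty=\mathbf{x}'$) and $\lambda'=\lambda_\infty$.
   Context: Vector inequalities are coordinatewise; $\mathbb{R}_+$, $\mathbb{R}_{++}$ denote nonnegative and positive reals. A norm $\|\cdot\|$ on $\mathbb{R}^N$ is monotone if $\mathbf{0}\le\mathbf{x}\le\mathbf{y}$ implies $\|\mathbf{x}\|\le\|\mathbf{y}\|$. A function $f:\mathbb{R}^N\to\mathbb{R}_{++}\cup\{\infty\}$ is a standard interference function if: (1) for all $\mathbf{x}\in\mathbb{R}_+^N$ and all $\alpha>1$, $\alpha f(\mathbf{x})>f(\alpha\mathbf{x})$; (2) for all $\mathbf{x}_1,\mathbf{x}_2\in\mathbb{R}_+^N$, $\mathbf{x}_1\ge\mathbf{x}_2$ implies $f(\mathbf{x}_1)\ge f(\mathbf{x}_2)$; (3) $f(\mathbf{x})=\infty$ iff $\mathbf{x}\notin\mathbb{R}_+^N$. A standard interference mapping is $T:\mathbb{R}_+^N\to\mathbb{R}_{++}^N$, $T(\mathbf{x})=(t_1(\mathbf{x}),\dots,t_N(\mathbf{x}))$, with each $t_i$ a standard interference function. For a proper function $f:\mathbb{R}^N\to\mathbb{R}\cup\{\infty\}$, its asymptotic function is $f_\infty(\mathbf{x})=\inf\{\liminf_{n\to\infty} f(h_n\mathbf{x}_n)/h_n : h_n\to\infty,\ \mathbf{x}_n\to\mathbf{x}\}$. The asymptotic mapping of $T$ is $T_\infty(\mathbf{x})=((t_1)_\infty(\mathbf{x}),\dots,(t_N)_\infty(\mathbf{x}))$ on $\mathbb{R}_+^N$.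 For a power budget $\bar p>0$, consider the problem: maximize $c$ over $(\mathbf{p},c)\in\mathbb{R}_+^N\times\mathbb{R}_{++}$ subject to $\mathbf{p}=cT(\mathbf{p})$ and $\|\mathbf{p}\|_a\le\bar p$. It is known that this problem has a unique solution $(\mathbf{p}_{\bar p},c_{\bar p})\in\mathbb{R}_{++}^N\times\mathbb{R}_{++}$, that it satisfies $T(\mathbf{p}_{\bar p})=(1/c_{\bar p})\mathbf{p}_{\bar p}$ and $\|\mathbf{p}_{\bar p}\|_a=\bar p$, and that $\bar p\mapsto c_{\bar p}$ is strictly increasing. *)

theory Defs
  imports "HOL-Analysis.Analysis"
begin

definition nonneg :: "(real ^ 'n) set" where
  "nonneg = {x. \<forall>i. 0 \<le> x $ i}"

definition posv :: "(real ^ 'n) set" where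
  "posv = {x. \<forall>i. 0 < x $ i}"

definition is_norm :: "(real ^ 'n \<Rightarrow> real) \<Rightarrow> bool" where
  "is_norm na \<longleftrightarrow>
     (\<forall>x. 0 \<le> na x) \<and> (\<forall>x. na x = 0 \<longleftrightarrow> x = 0) \<and>
     (\<forall>c x. na (c *\<^sub>R x) = \<bar>c\<bar> * na x) \<and>
     (\<forall>x y. na (x + y) \<le> na x + na y)"

definition monotone_norm :: "(real ^ 'n \<Rightarrow> real) \<Rightarrow> bool" where
  "monotone_norm na \<longleftrightarrow> is_norm na \<and>
     (\<forall>x y. (\<forall>i. 0 \<le> x $ i \<and> x $ i \<le> y $ i) \<longrightarrow> na x \<le> na y)"

text \<open>A standard interference function, given by its (positive real) values on the
  nonnegative orthant; outside the orthant it takes the value infinity (see ext_fun).\<close>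
definition standard_interference_fun :: "(real ^ 'n \<Rightarrow> real) \<Rightarrow> bool" where
  "standard_interference_fun f \<longleftrightarrow>
     (\<forall>x\<in>nonneg. 0 < f x) \<and>
     (\<forall>x\<in>nonneg. \<forall>\<alpha>>1. f (\<alpha> *\<^sub>R x) < \<alpha> * f x) \<and>
     (\<forall>x1\<in>nonneg. \<forall>x2\<in>nonneg. (\<forall>i. x2 $ i \<le> x1 $ i) \<longrightarrow> f x2 \<le> f x1)"

definition standard_interference_map :: "(real ^ 'n \<Rightarrow> real ^ 'n) \<Rightarrow> bool" where
  "standard_interference_map T \<longleftrightarrow> (\<forall>i. standard_interference_fun (\<lambda>x. T x $ i))"

definition ext_fun :: "(real ^ 'n \<Rightarrow> real) \<Rightarrow> real ^ 'n \<Rightarrow> ereal" where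
  "ext_fun f x = (if x \<in> nonneg then ereal (f x) else \<infinity>)"

definition asymptotic_fun :: "(real ^ 'n \<Rightarrow> real) \<Rightarrow> real ^ 'n \<Rightarrow> ereal" where
  "asymptotic_fun f x = Inf {liminf (\<lambda>n. ext_fun f (h n *\<^sub>R y n) / ereal (h n)) | h y.
       filterlim h at_top sequentially \<and> y \<longlonglongrightarrow> x}"

definition asymptotic_map :: "(real ^ 'n \<Rightarrow> real ^ 'n) \<Rightarrow> real ^ 'n \<Rightarrow> 'n \<Rightarrow> ereal" where
  "asymptotic_map T x i = asymptotic_fun (\<lambda>y. T y $ i) x"

text \<open>Feasible points of: maximize c s.t. p = c T(p), ||p||_a \<le> pbar.\<close>
definition feasible :: "(real ^ 'n \<Rightarrow> real ^ 'n) \<Rightarrow> (real ^ 'n \<Rightarrow> real) \<Rightarrow> real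
    \<Rightarrow> real ^ 'n \<Rightarrow> real \<Rightarrow> bool" where
  "feasible T na pbar p c \<longleftrightarrow> p \<in> nonneg \<and> 0 < c \<and> p = c *\<^sub>R T p \<and> na p \<le> pbar"

definition is_solution :: "(real ^ 'n \<Rightarrow> real ^ 'n) \<Rightarrow> (real ^ 'n \<Rightarrow> real) \<Rightarrow> real
    \<Rightarrow> real ^ 'n \<Rightarrow> real \<Rightarrow> bool" where
  "is_solution T na pbar p c \<longleftrightarrow> feasible T na pbar p c \<and>
     (\<forall>p' c'. feasible T na pbar p' c' \<longrightarrow> c' \<le> c)"

definition asym_eig :: "(real ^ 'n \<Rightarrow> real ^ 'n) \<Rightarrow> (real ^ 'n \<Rightarrow> real)
    \<Rightarrow> real ^ 'n \<Rightarrow> real \<Rightarrow> bool" where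
  "asym_eig T na x l \<longleftrightarrow> x \<in> nonneg \<and> 0 \<le> l \<and>
     (\<forall>i. asymptotic_map T x i = ereal (l * x $ i)) \<and> na x = 1"

end

theory Submission
  imports Defs
begin


lemma C_mono:
  assumes sol: "\<And>pbar. 0 < pbar \<Longrightarrow> is_solution T na pbar (P pbar) (C pbar)"
    and "0 < p1" "p1 \<le> p2"
  shows "C p1 \<le> C p2" "0 < C p1"
proof -
  have f1: "feasible T na p1 (P p1) (C p1)" using sol[OF assms(2)] by (simp add: is_solution_def)
  then have "feasible T na p2 (P p1) (C p1)" using assms by (auto simp: feasible_def)
  then show "C p1 \<le> C p2" using sol[of p2] assms by (simp add: is_solution_def)
  show "0 < C p1" using f1 by (simp add: feasible_def)
qed

lemma lam_limit:
  assumes sol: "\<And>pbar. 0 < pbar \<Longrightarrow> is_solution T na pbar (P pbar) (C pbar)"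
  obtains L where "L \<ge> 0" "((\<lambda>pbar. 1 / C pbar) \<longlongrightarrow> L) at_top" "\<And>p. 0 < p \<Longrightarrow> L \<le> 1 / C p"
proof -
  define S where "S = (\<lambda>p. 1 / C p) ` {0<..}"
  define L where "L = Inf S"
  have Sne: "S \<noteq> {}" unfolding S_def by auto
  have Sbdd: "bdd_below S" unfolding S_def bdd_below_def
    using C_mono(2)[OF sol _ order_refl] by (auto intro!: exI[of _ 0] less_imp_le)
  have Lle: "L \<le> 1 / C p" if "0 < p" for p
    unfolding L_def using that Sbdd by (auto simp: S_def intro!: cInf_lower)
  have L0: "L \<ge> 0" unfolding L_def using Sne
    by (rule cInf_greatest) (use C_mono(2)[OF sol _ order_refl] in \<open>auto simp: S_def intro: less_imp_le\<close>)
  have anti: "1 / C q \<le> 1 / C p" if "0 < p" "p \<le> q" for p q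
    using C_mono[OF sol that] C_mono(2)[OF sol _ order_refl, of q] that
    by (simp add: frac_le)
  have "((\<lambda>pbar. 1 / C pbar) \<longlongrightarrow> L) at_top"
  proof (rule order_tendstoI)
    fix a assume "a < L"
    then show "eventually (\<lambda>p. a < 1 / C p) at_top"
    proof (unfold eventually_at_top_linorder, intro exI[of _ 1] allI impI)
      fix p :: real assume "1 \<le> p"
      then show "a < 1 / C p" using Lle[of p] \<open>a < L\<close> by linarith
    qed
  next
    fix a assume "L < a"
    then obtain s where "s \<in> S" "s < a" using Sne unfolding L_def by (meson cInf_lessD)
    then obtain p where p: "0 < p" "1 / C p < a" by (auto simp: S_def)
    show "eventually (\<lambda>q. 1 / C q < a) at_top"
    proof (unfold eventually_at_top_linorder, intro exI[of _ p] allI impI)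
      fix q :: real assume "p \<le> q"
      then show "1 / C q < a" using anti[of p q] p by linarith
    qed
  qed
  then show ?thesis using that L0 Lle by blast
qed



lemma std_pos: "standard_interference_map T \<Longrightarrow> x \<in> nonneg \<Longrightarrow> 0 < T x $ i"
  by (simp add: standard_interference_map_def standard_interference_fun_def)

lemma std_mono: "standard_interference_map T \<Longrightarrow> x1 \<in> nonneg \<Longrightarrow> x2 \<in> nonneg \<Longrightarrow>
   (\<forall>j. x2 $ j \<le> x1 $ j) \<Longrightarrow> T x2 $ i \<le> T x1 $ i"
  by (simp add: standard_interference_map_def standard_interference_fun_def)

lemma std_scal: "standard_interference_map T \<Longrightarrow> x \<in> nonneg \<Longrightarrow> 1 < a \<Longrightarrow>
   T (a *\<^sub>R x) $ i < a * T x $ i"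
  by (simp add: standard_interference_map_def standard_interference_fun_def)

lemma std_scal_le: "standard_interference_map T \<Longrightarrow> x \<in> nonneg \<Longrightarrow> 1 \<le> a \<Longrightarrow>
   T (a *\<^sub>R x) $ i \<le> a * T x $ i"
  using std_scal[of T x a i] by (cases "a = 1") auto

lemma nonneg_scale: "x \<in> nonneg \<Longrightarrow> 0 \<le> a \<Longrightarrow> a *\<^sub>R x \<in> nonneg"
  by (simp add: nonneg_def)

lemma na_scale: "monotone_norm na \<Longrightarrow> na (c *\<^sub>R x) = \<bar>c\<bar> * na x"
  by (simp add: monotone_norm_def is_norm_def)

lemma na_mono: "monotone_norm na \<Longrightarrow> (\<forall>i. 0 \<le> x $ i \<and> x $ i \<le> y $ i) \<Longrightarrow> na x \<le> na y"
  by (simp add: monotone_norm_def)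

lemma na_pos: "monotone_norm na \<Longrightarrow> x \<noteq> 0 \<Longrightarrow> 0 < na x"
  unfolding monotone_norm_def is_norm_def by (metis less_eq_real_def)

lemma na_tri: "monotone_norm na \<Longrightarrow> na (x + y) \<le> na x + na y"
  by (simp add: monotone_norm_def is_norm_def)

lemma na_axis: "monotone_norm na \<Longrightarrow> x \<in> nonneg \<Longrightarrow> x $ i * na (axis i 1) \<le> na x"
proof -
  assume na: "monotone_norm na" and x: "x \<in> nonneg"
  have "na ((x $ i) *\<^sub>R axis i 1) \<le> na x"
    using x by (intro na_mono[OF na]) (auto simp: nonneg_def axis_def)
  then show ?thesis using na_scale[OF na] x by (simp add: nonneg_def)
qed

lemma na_sum: assumes na: "monotone_norm na" and A: "finite A"
  shows "na (sum f A) \<le> (\<Sum>i\<in>A. na (f i))"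
  using A
proof (induction A rule: finite_induct)
  case empty
  then show ?case using na_scale[OF na, of 0 0] by simp
next
  case (insert a A)
  then show ?case using na_tri[OF na, of "f a" "sum f A"] by simp
qed

lemma na_bound: assumes "monotone_norm na"
  shows "na x \<le> (\<Sum>i\<in>UNIV. \<bar>x $ i\<bar> * na (axis i 1))"
proof -
  have "x = (\<Sum>i\<in>UNIV. (x $ i) *\<^sub>R axis i 1)"
    using basis_expansion[of x] by (simp add: scalar_mult_eq_scaleR)
  then have "na x = na (\<Sum>i\<in>UNIV. (x $ i) *\<^sub>R axis i 1)" by simp
  also have "\<dots> \<le> (\<Sum>i\<in>UNIV. na ((x $ i) *\<^sub>R axis i 1))" by (rule na_sum[OF assms]) simp
  also have "\<dots> = (\<Sum>i\<in>UNIV. \<bar>x $ i\<bar> * na (axis i 1))" using na_scale[OF assms] by simp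
  finally show ?thesis .
qed

lemma na_tendsto:
  fixes f :: "'a \<Rightarrow> real ^ 'n"
  assumes na: "monotone_norm na" and f: "(f \<longlongrightarrow> l) F"
  shows "((\<lambda>n. na (f n)) \<longlongrightarrow> na l) F"
proof (rule LIM_zero_cancel, rule Lim_null_comparison)
  let ?g = "\<lambda>n. (\<Sum>i\<in>UNIV. \<bar>(f n - l) $ i\<bar> * na (axis i 1))"
  have neg: "na (- z) = na z" for z using na_scale[OF na, of "-1" z] by simp
  show "eventually (\<lambda>n. norm (na (f n) - na l) \<le> ?g n) F"
  proof (rule always_eventually, rule allI)
    fix n
    have "na (f n) \<le> na l + na (f n - l)" using na_tri[OF na, of l "f n - l"] by simp
    moreover have "na l \<le> na (f n) + na (l - f n)" using na_tri[OF na, of "f n" "l - f n"] by simp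
    moreover have "na (l - f n) = na (f n - l)" using neg[of "f n - l"] by simp
    ultimately have "norm (na (f n) - na l) \<le> na (f n - l)" by auto
    also have "\<dots> \<le> ?g n" by (rule na_bound[OF na])
    finally show "norm (na (f n) - na l) \<le> ?g n" .
  qed
  have "((\<lambda>n. (\<Sum>i\<in>UNIV. \<bar>(f n - l) $ i\<bar> * na (axis i 1))) \<longlongrightarrow> (\<Sum>i\<in>UNIV. \<bar>(l - l) $ i\<bar> * na (axis i 1))) F"
    by (intro tendsto_intros f)
  then show "(?g \<longlongrightarrow> 0) F" by simp
qed



lemma sol_basic:
  assumes T: "standard_interference_map T"
    and sol: "\<And>pbar. 0 < pbar \<Longrightarrow> is_solution T na pbar (P pbar) (C pbar)"
    and pb: "0 < pbar"
  shows "P pbar \<in> nonneg" "0 < C pbar" "P pbar = C pbar *\<^sub>R T (P pbar)" "na (P pbar) \<le> pbar"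
    "\<And>i. 0 < P pbar $ i"
proof -
  have f: "feasible T na pbar (P pbar) (C pbar)" using sol[OF pb] by (simp add: is_solution_def)
  then show "P pbar \<in> nonneg" "0 < C pbar" "P pbar = C pbar *\<^sub>R T (P pbar)" "na (P pbar) \<le> pbar"
    by (auto simp: feasible_def)
  fix i
  have e: "P pbar = C pbar *\<^sub>R T (P pbar)" using f by (simp add: feasible_def)
  have "P pbar $ i = C pbar * T (P pbar) $ i" using arg_cong[OF e, of "\<lambda>v. v $ i"] by simp
  then show "0 < P pbar $ i" using f std_pos[OF T, of "P pbar" i] by (simp add: feasible_def)
qed

lemma na_P:
  assumes T: "standard_interference_map T" and na: "monotone_norm na"
    and sol: "\<And>pbar. 0 < pbar \<Longrightarrow> is_solution T na pbar (P pbar) (C pbar)"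
    and cont: "continuous_on nonneg T"
    and pb: "0 < pbar"
  shows "na (P pbar) = pbar"
proof (rule ccontr)
  assume ne: "na (P pbar) \<noteq> pbar"
  define p where "p = P pbar"
  define c where "c = C pbar"
  note bas = sol_basic[OF T sol pb, folded p_def c_def]
  have pi: "p $ i = c * T p $ i" for i using arg_cong[OF bas(3), of "\<lambda>v. v $ i"] by simp
  have "p \<noteq> 0" using bas(5)[of undefined] by auto
  then have nap: "0 < na p" by (rule na_pos[OF na])
  have lt: "na p < pbar" using bas(4) ne p_def by simp
  define \<beta> where "\<beta> = pbar / na p"
  have b1: "1 < \<beta>" using nap lt by (simp add: \<beta>_def)
  have nab: "na (\<beta> *\<^sub>R p) = pbar" using na_scale[OF na] nap b1 by (simp add: \<beta>_def)
  have bpn: "\<beta> *\<^sub>R p \<in> nonneg" using nonneg_scale[OF bas(1)] b1 by simp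
  define ratio where "ratio i = T (\<beta> *\<^sub>R p) $ i / (\<beta> * T p $ i)" for i
  define \<theta> where "\<theta> = Max (range ratio)"
  have Tp: "0 < T p $ i" for i using std_pos[OF T bas(1)] .
  have rlt: "ratio i < 1" for i
    using std_scal[OF T bas(1) b1, of i] Tp[of i] b1 by (simp add: ratio_def)
  have rpos: "0 < ratio i" for i
    using std_pos[OF T bpn, of i] Tp[of i] b1 by (simp add: ratio_def)
  have fin: "finite (range ratio)" by simp
  have th1: "\<theta> < 1" unfolding \<theta>_def using fin rlt by (subst Max_less_iff) auto
  have rle: "ratio i \<le> \<theta>" for i unfolding \<theta>_def by (rule Max_ge[OF fin]) simp
  have th0: "0 < \<theta>" using rpos[of undefined] rle[of undefined] by linarith
  define c' where "c' = c / \<theta>"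
  have cc': "c < c'" using th0 th1 bas(2) by (simp add: c'_def field_simps)
  define S where "S = cbox p (\<beta> *\<^sub>R p)"
  have memS: "q \<in> S \<longleftrightarrow> (\<forall>i. p $ i \<le> q $ i \<and> q $ i \<le> \<beta> * p $ i)" for q
    by (simp add: S_def mem_box_cart)
  have Snn: "S \<subseteq> nonneg"
  proof
    fix q assume "q \<in> S"
    then have qi: "p $ i \<le> q $ i" for i using memS by blast
    show "q \<in> nonneg" unfolding nonneg_def
    proof (rule CollectI, rule allI)
      fix i show "0 \<le> q $ i" using qi[of i] bas(5)[of i] by linarith
    qed
  qed
  have "\<exists>q\<in>S. c' *\<^sub>R T q = q"
  proof (rule brouwer)
    show "compact S" by (simp add: S_def)
    show "convex S" by (simp add: S_def)
    have "p $ i \<le> \<beta> * p $ i" for i using b1 bas(5)[of i] by (simp add: mult_le_cancel_right1)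
    then have "p \<in> S" unfolding memS by simp
    then show "S \<noteq> {}" by blast
    show "continuous_on S (\<lambda>q. c' *\<^sub>R T q)"
      by (intro continuous_intros continuous_on_subset[OF cont Snn])
    show "(\<lambda>q. c' *\<^sub>R T q) \<in> S \<rightarrow> S"
    proof
      fix q assume q: "q \<in> S"
      have qn: "q \<in> nonneg" using q Snn by auto
      show "c' *\<^sub>R T q \<in> S" unfolding memS
      proof
        fix i
        have m1: "T p $ i \<le> T q $ i" using std_mono[OF T qn bas(1)] q memS by auto
        have m2: "T q $ i \<le> T (\<beta> *\<^sub>R p) $ i" using std_mono[OF T bpn qn] q memS by auto
        have "p $ i \<le> c' * T q $ i"
        proof -
          have Tq: "0 < T q $ i" using std_pos[OF T qn] .
          have "p $ i = c * T p $ i" by (rule pi)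
          also have "\<dots> \<le> c * T q $ i" using m1 bas(2) by (simp add: mult_left_mono)
          also have "\<dots> \<le> c' * T q $ i" using cc' Tq by (simp add: mult_right_mono)
          finally show ?thesis .
        qed
        moreover have "c' * T q $ i \<le> \<beta> * p $ i"
        proof -
          have Tb: "T (\<beta> *\<^sub>R p) $ i \<le> \<theta> * (\<beta> * T p $ i)"
          proof -
            have "T (\<beta> *\<^sub>R p) $ i = ratio i * (\<beta> * T p $ i)"
              using Tp[of i] b1 by (simp add: ratio_def)
            also have "\<dots> \<le> \<theta> * (\<beta> * T p $ i)"
              using rle[of i] Tp[of i] b1 by (intro mult_right_mono) auto
            finally show ?thesis .
          qed
          have c'0: "0 \<le> c'" using cc' bas(2) by simp
          have "c' * T q $ i \<le> c' * T (\<beta> *\<^sub>R p) $ i" using c'0 m2 by (simp add: mult_left_mono)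
          also have "\<dots> \<le> c' * (\<theta> * (\<beta> * T p $ i))" using c'0 Tb by (simp add: mult_left_mono)
          also have "\<dots> = \<beta> * p $ i" using th0 pi[of i] by (simp add: c'_def)
          finally show ?thesis .
        qed
        ultimately show "p $ i \<le> (c' *\<^sub>R T q) $ i \<and> (c' *\<^sub>R T q) $ i \<le> \<beta> * p $ i" by simp
      qed
    qed
  qed blast
  then obtain q where q: "q \<in> S" "c' *\<^sub>R T q = q" by blast
  have qn: "q \<in> nonneg" using q Snn by auto
  have "na q \<le> na (\<beta> *\<^sub>R p)" using q memS qn by (intro na_mono[OF na]) (auto simp: nonneg_def)
  then have "feasible T na pbar q c'" using q qn cc' bas(2) nab by (auto simp: feasible_def)
  then have "c' \<le> c" using sol[OF pb] by (simp add: is_solution_def c_def)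
  then show False using cc' by simp
qed



lemma conv_subseq:
  fixes x :: "nat \<Rightarrow> real ^ 'n"
  assumes K: "\<forall>n. x n \<in> K" "compact K"
    and u: "\<And>r l. strict_mono r \<Longrightarrow> (x \<circ> r) \<longlonglongrightarrow> l \<Longrightarrow> l = a"
  shows "x \<longlonglongrightarrow> a"
proof (rule ccontr)
  assume "\<not> x \<longlonglongrightarrow> a"
  then obtain e where e: "0 < e" "\<not> eventually (\<lambda>n. dist (x n) a < e) sequentially"
    unfolding tendsto_iff by blast
  then have "frequently (\<lambda>n. \<not> dist (x n) a < e) sequentially"
    by (simp add: not_eventually)
  then have "infinite {n. \<not> dist (x n) a < e}"
    by (simp add: frequently_cofinite[symmetric] cofinite_eq_sequentially)
  then obtain s :: "nat \<Rightarrow> nat" where s: "strict_mono s" "\<forall>n. \<not> dist (x (s n)) a < e"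
    using infinite_enumerate by blast
  have "\<forall>n. (x \<circ> s) n \<in> K" using K by simp
  then obtain l t where lt: "l \<in> K" "strict_mono t" "((x \<circ> s) \<circ> t) \<longlonglongrightarrow> l"
    using seq_compactE[OF compact_imp_seq_compact[OF K(2)]] by metis
  have "l = a" using u[of "s \<circ> t" l] lt s strict_mono_o by (metis comp_assoc)
  then have "eventually (\<lambda>n. dist (x (s (t n))) a < e) sequentially"
    using lt(3) e(1) unfolding tendsto_iff by simp
  then obtain n where "dist (x (s (t n))) a < e" using eventually_sequentially by auto
  then show False using s by blast
qed



lemma part2:
  fixes T :: "real ^ 'n \<Rightarrow> real ^ 'n" and na :: "real ^ 'n \<Rightarrow> real"
  assumes T: "standard_interference_map T" and na: "monotone_norm na"
    and sol: "\<And>pbar. 0 < pbar \<Longrightarrow> is_solution T na pbar (P pbar) (C pbar)"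
    and cont: "continuous_on nonneg T"
    and L0: "0 \<le> L" and Llim: "((\<lambda>pbar. 1 / C pbar) \<longlongrightarrow> L) at_top"
    and Lle: "\<And>p. 0 < p \<Longrightarrow> L \<le> 1 / C p"
    and pbpos: "\<forall>n. 0 < pb n" and pbtop: "filterlim pb at_top sequentially"
    and xdef: "x = (\<lambda>n. (1 / na (P (pb n))) *\<^sub>R P (pb n))"
    and xinf: "xinf \<in> nonneg" and r: "strict_mono r" and xr: "(x \<circ> r) \<longlonglongrightarrow> xinf"
  shows "asym_eig T na xinf L"
proof -
  have naP: "na (P (pb n)) = pb n" for n using na_P[OF T na sol cont] pbpos by auto
  have xn: "x n = (1 / pb n) *\<^sub>R P (pb n)" for n using xdef naP by simp
  have Px: "P (pb n) = pb n *\<^sub>R x n" for n using xn pbpos[rule_format, of n] by simp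
  have bas1: "P p \<in> nonneg" if "0 < p" for p using sol_basic(1)[OF T sol that] .
  have bas2: "0 < C p" if "0 < p" for p using sol_basic(2)[OF T sol that] .
  have bas3: "P p = C p *\<^sub>R T (P p)" if "0 < p" for p using sol_basic(3)[OF T sol that] .
  have xnn: "x n \<in> nonneg" for n unfolding xn using pbpos
    by (intro nonneg_scale bas1) (auto simp: less_imp_le)
  have TP: "T (P (pb n)) $ i = (1 / C (pb n)) * P (pb n) $ i" for n i
  proof -
    have c0: "0 < C (pb n)" using bas2[OF pbpos[rule_format, of n]] .
    have "P (pb n) $ i = C (pb n) * T (P (pb n)) $ i"
      using arg_cong[OF bas3[OF pbpos[rule_format, of n]], of "\<lambda>v. v $ i"] by simp
    then show ?thesis using c0 by simp
  qed
  have nax: "na (x n) = 1" for n using xdef na_scale[OF na] naP pbpos[rule_format, of n] by simp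
  have xcomp: "((\<lambda>n. x (r n) $ i) \<longlongrightarrow> xinf $ i) sequentially" for i
    using tendsto_vec_nth[OF xr, of i] by (simp add: o_def)
  have pbr: "filterlim (\<lambda>n. pb (r n)) at_top sequentially"
    using filterlim_compose[OF pbtop filterlim_subseq[OF r]] by (simp add: o_def)
  have lamr: "((\<lambda>n. 1 / C (pb (r n))) \<longlongrightarrow> L) sequentially"
    using filterlim_compose[OF Llim pbr] by simp
  have nainf: "na xinf = 1"
  proof -
    have "((\<lambda>n. na ((x \<circ> r) n)) \<longlongrightarrow> na xinf) sequentially" by (rule na_tendsto[OF na xr])
    then show ?thesis using nax by (simp add: LIMSEQ_const_iff)
  qed
  have comp: "asymptotic_map T xinf i = ereal (L * xinf $ i)" for i
  proof -
    let ?f = "\<lambda>y. T y $ i"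
    let ?a = "L * xinf $ i"
    define Set where "Set = {liminf (\<lambda>n. ext_fun ?f (h n *\<^sub>R y n) / ereal (h n)) | h y.
       filterlim h at_top sequentially \<and> y \<longlonglongrightarrow> xinf}"
    have am: "asymptotic_map T xinf i = Inf Set"
      by (simp add: asymptotic_map_def asymptotic_fun_def Set_def)
    have a0: "0 \<le> ?a" using L0 xinf by (simp add: nonneg_def)
    have up: "Inf Set \<le> ereal ?a"
    proof -
      let ?h = "\<lambda>n. pb (r n)" and ?y = "\<lambda>n. x (r n)"
      have seq: "ext_fun ?f (?h n *\<^sub>R ?y n) / ereal (?h n) = ereal (1 / C (pb (r n)) * x (r n) $ i)" for n
      proof -
        have pos: "0 < pb (r n)" using pbpos by simp
        have nn: "P (pb (r n)) \<in> nonneg" using bas1[OF pos] .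
        have eq: "?h n *\<^sub>R ?y n = P (pb (r n))" using Px by simp
        have q: "T (P (pb (r n))) $ i / pb (r n) = 1 / C (pb (r n)) * x (r n) $ i"
          using TP xn pos by simp
        have "ext_fun ?f (?h n *\<^sub>R ?y n) = ereal (T (P (pb (r n))) $ i)"
          unfolding eq using nn by (simp add: ext_fun_def)
        then show ?thesis using pos q by simp
      qed
      have "((\<lambda>n. 1 / C (pb (r n)) * x (r n) $ i) \<longlongrightarrow> ?a) sequentially"
        by (intro tendsto_mult lamr xcomp)
      then have "liminf (\<lambda>n. ext_fun ?f (?h n *\<^sub>R ?y n) / ereal (?h n)) = ereal ?a"
        unfolding seq by (intro lim_imp_Liminf) auto
      moreover have "liminf (\<lambda>n. ext_fun ?f (?h n *\<^sub>R ?y n) / ereal (?h n)) \<in> Set"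
        unfolding Set_def using pbr xr by (auto simp: o_def)
      ultimately show ?thesis by (metis Inf_lower)
    qed
    have key: "h0 * ?a \<le> ?f (h0 *\<^sub>R xinf)" if h0: "0 < h0" for h0
    proof -
      have lim1: "((\<lambda>n. ?f (h0 *\<^sub>R x (r n))) \<longlongrightarrow> ?f (h0 *\<^sub>R xinf)) sequentially"
      proof (rule continuous_on_tendsto_compose[of nonneg ?f])
        show "continuous_on nonneg ?f" by (intro continuous_intros cont)
        show "((\<lambda>n. h0 *\<^sub>R x (r n)) \<longlongrightarrow> h0 *\<^sub>R xinf) sequentially"
          using xr by (intro tendsto_intros) (simp add: o_def)
        show "h0 *\<^sub>R xinf \<in> nonneg" using xinf h0 by (intro nonneg_scale) auto
        show "\<forall>\<^sub>F n in sequentially. h0 *\<^sub>R x (r n) \<in> nonneg" using xnn h0 by (intro always_eventually allI nonneg_scale) auto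
      qed
      have lim2: "((\<lambda>n. h0 * (L * x (r n) $ i)) \<longlongrightarrow> h0 * ?a) sequentially"
        by (intro tendsto_intros xcomp)
      have ev: "eventually (\<lambda>n. h0 * (L * x (r n) $ i) \<le> ?f (h0 *\<^sub>R x (r n))) sequentially"
      proof -
        have "eventually (\<lambda>n. h0 \<le> pb (r n)) sequentially"
          using pbr by (simp add: filterlim_at_top)
        then show ?thesis
        proof (rule eventually_mono)
          fix n assume hn: "h0 \<le> pb (r n)"
          define pn where "pn = pb (r n)"
          define u where "u = h0 *\<^sub>R x (r n)"
          define lam where "lam = 1 / C pn"
          have pn0: "0 < pn" using pbpos pn_def by simp
          have un: "u \<in> nonneg" unfolding u_def using xnn h0 by (intro nonneg_scale) auto
          have al: "1 \<le> pn / h0" using hn h0 by (simp add: pn_def le_divide_eq)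
          have Pu: "P pn = (pn / h0) *\<^sub>R u" using Px[of "r n"] h0 by (simp add: u_def pn_def)
          have "T (P pn) $ i \<le> (pn / h0) * T u $ i"
            unfolding Pu by (rule std_scal_le[OF T un al])
          moreover have "T (P pn) $ i = lam * pn * x (r n) $ i"
            using TP[of "r n" i] Px[of "r n"] by (simp add: lam_def pn_def)
          ultimately have "lam * pn * x (r n) $ i \<le> (pn / h0) * T u $ i" by simp
          then have "pn * (lam * x (r n) $ i) \<le> pn * (T u $ i / h0)"
            by (simp add: algebra_simps)
          then have "lam * x (r n) $ i \<le> T u $ i / h0"
            using pn0 by (rule mult_left_le_imp_le)
          then have "h0 * (lam * x (r n) $ i) \<le> T u $ i"
            using h0 by (simp add: le_divide_eq mult.commute)
          moreover have "h0 * (L * x (r n) $ i) \<le> h0 * (lam * x (r n) $ i)"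
            using Lle[OF pn0] xnn[of "r n"] h0
            by (intro mult_left_mono mult_right_mono) (auto simp: lam_def nonneg_def)
          ultimately show "h0 * (L * x (r n) $ i) \<le> ?f (h0 *\<^sub>R x (r n))"
            unfolding u_def by linarith
        qed
      qed
      show ?thesis using tendsto_le[OF _ lim1 lim2 ev] by simp
    qed
    have low: "ereal ?a \<le> z" if "z \<in> Set" for z
    proof -
      obtain h y where z: "z = liminf (\<lambda>n. ext_fun ?f (h n *\<^sub>R y n) / ereal (h n))"
        and h: "filterlim h at_top sequentially" and y: "y \<longlonglongrightarrow> xinf"
        using \<open>z \<in> Set\<close> unfolding Set_def by blast
      have dl: "ereal (d * ?a) \<le> z" if d: "0 < d" "d < 1" for d
      proof -
        have evj: "eventually (\<lambda>n. y n \<in> nonneg \<longrightarrow> d * xinf $ j \<le> y n $ j) sequentially" for j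
        proof (cases "xinf $ j = 0")
          case True
          then show ?thesis by (simp add: nonneg_def)
        next
          case False
          then have xp: "0 < xinf $ j" using xinf by (simp add: nonneg_def less_le)
          have "d * xinf $ j < 1 * xinf $ j" by (rule mult_strict_right_mono) (use d xp in auto)
          then have "d * xinf $ j < xinf $ j" by simp
          then have "eventually (\<lambda>n. d * xinf $ j < y n $ j) sequentially"
            using order_tendstoD(1)[OF tendsto_vec_nth[OF y, of j]] by simp
          then show ?thesis by (rule eventually_mono) simp
        qed
        have ev: "eventually (\<lambda>n. 0 < h n \<and> (y n \<in> nonneg \<longrightarrow> (\<forall>j. d * xinf $ j \<le> y n $ j))) sequentially"
        proof -
          have e1: "eventually (\<lambda>n. \<forall>j. y n \<in> nonneg \<longrightarrow> d * xinf $ j \<le> y n $ j) sequentially"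
            by (rule eventually_all_finite) (rule evj)
          have e2: "eventually (\<lambda>n. 0 < h n) sequentially"
            using h by (simp add: filterlim_at_top_dense)
          show ?thesis using eventually_conj[OF e2 e1] by (rule eventually_mono) blast
        qed
        have "ereal (d * ?a) \<le> z" unfolding z
        proof (rule Liminf_bounded, rule eventually_mono[OF ev], elim conjE)
          fix n assume hn: "0 < h n" and yn: "y n \<in> nonneg \<longrightarrow> (\<forall>j. d * xinf $ j \<le> y n $ j)"
          show "ereal (d * ?a) \<le> ext_fun ?f (h n *\<^sub>R y n) / ereal (h n)"
          proof (cases "y n \<in> nonneg")
            case False
            then have "h n *\<^sub>R y n \<notin> nonneg" using hn nonneg_scale[of "h n *\<^sub>R y n" "1 / h n"] by auto
            then show ?thesis using hn by (simp add: ext_fun_def)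
          next
            case True
            have hy: "h n *\<^sub>R y n \<in> nonneg" using True hn by (intro nonneg_scale) auto
            have hx: "(h n * d) *\<^sub>R xinf \<in> nonneg" using xinf hn d by (intro nonneg_scale) auto
            have "h n * d * ?a \<le> ?f ((h n * d) *\<^sub>R xinf)" using key[of "h n * d"] hn d by simp
            also have "\<dots> \<le> ?f (h n *\<^sub>R y n)"
              using yn True hn by (intro std_mono[OF T hy hx]) (auto simp: mult.assoc)
            finally have "d * ?a \<le> ?f (h n *\<^sub>R y n) / h n" using hn by (simp add: field_simps)
            then show ?thesis using hy hn by (simp add: ext_fun_def)
          qed
        qed
        then show ?thesis .
      qed
      show ?thesis
      proof (cases z)
        case (real t)
        have "?a \<le> t" by (rule field_le_mult_one_interval) (use dl real in auto)
        then show ?thesis using real by simp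
      next
        case PInf then show ?thesis by simp
      next
        case MInf then show ?thesis using dl[of "1/2"] by simp
      qed
    qed
    have "ereal ?a \<le> Inf Set" by (rule Inf_greatest) (rule low)
    then show ?thesis using up am by simp
  qed
  show ?thesis unfolding asym_eig_def using xinf L0 comp nainf by blast
qed



theorem proposition2:
  fixes T :: "real ^ 'n \<Rightarrow> real ^ 'n"
    and na :: "real ^ 'n \<Rightarrow> real"
    and P :: "real \<Rightarrow> real ^ 'n"
    and C :: "real \<Rightarrow> real"
  assumes T: "standard_interference_map T"
    and na: "monotone_norm na"
    and sol: "\<And>pbar. 0 < pbar \<Longrightarrow> is_solution T na pbar (P pbar) (C pbar)"
  shows "\<exists>L\<ge>0. ((\<lambda>pbar. 1 / C pbar) \<longlongrightarrow> L) at_top \<and>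
     (continuous_on nonneg T \<longrightarrow>
       (\<forall>pb :: nat \<Rightarrow> real. (\<forall>n. 0 < pb n) \<and> incseq pb \<and> filterlim pb at_top sequentially \<longrightarrow>
         (let x = (\<lambda>n. (1 / na (P (pb n))) *\<^sub>R P (pb n)) in
           (\<forall>xinf. xinf \<in> nonneg \<and> (\<exists>r. strict_mono r \<and> (x \<circ> r) \<longlonglongrightarrow> xinf)
                \<longrightarrow> asym_eig T na xinf L) \<and>
           (\<forall>x' l'. {(y, l). asym_eig T na y l} = {(x', l')} \<and> x' \<in> posv \<and> 0 < l'
                \<longrightarrow> x \<longlonglongrightarrow> x' \<and> l' = L))))"
proof -
  obtain L where L0: "0 \<le> L" and Llim: "((\<lambda>pbar. 1 / C pbar) \<longlongrightarrow> L) at_top"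
    and Lle: "\<And>p. 0 < p \<Longrightarrow> L \<le> 1 / C p"
    using lam_limit[of T na P C] sol by blast
  have main: "\<forall>pb :: nat \<Rightarrow> real. (\<forall>n. 0 < pb n) \<and> incseq pb \<and> filterlim pb at_top sequentially \<longrightarrow>
         (let x = (\<lambda>n. (1 / na (P (pb n))) *\<^sub>R P (pb n)) in
           (\<forall>xinf. xinf \<in> nonneg \<and> (\<exists>r. strict_mono r \<and> (x \<circ> r) \<longlonglongrightarrow> xinf)
                \<longrightarrow> asym_eig T na xinf L) \<and>
           (\<forall>x' l'. {(y, l). asym_eig T na y l} = {(x', l')} \<and> x' \<in> posv \<and> 0 < l'
                \<longrightarrow> x \<longlonglongrightarrow> x' \<and> l' = L))" if cont: "continuous_on nonneg T"
  proof (intro allI impI, elim conjE)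
    fix pb :: "nat \<Rightarrow> real"
    assume pbpos: "\<forall>n. 0 < pb n" and "incseq pb" and pbtop: "filterlim pb at_top sequentially"
    define x where "x = (\<lambda>n. (1 / na (P (pb n))) *\<^sub>R P (pb n))"
    have p2: "asym_eig T na xinf L" if "xinf \<in> nonneg" "strict_mono r" "(x \<circ> r) \<longlonglongrightarrow> xinf" for xinf r
      by (rule part2[OF T na sol cont L0 Llim Lle pbpos pbtop x_def that])
    have A: "\<forall>xinf. xinf \<in> nonneg \<and> (\<exists>r. strict_mono r \<and> (x \<circ> r) \<longlonglongrightarrow> xinf) \<longrightarrow> asym_eig T na xinf L"
      using p2 by blast
    have naP: "na (P (pb n)) = pb n" for n using na_P[OF T na sol cont] pbpos by auto
    have xnn: "x n \<in> nonneg" for n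
    proof -
      have "P (pb n) \<in> nonneg" using sol_basic(1)[OF T sol pbpos[rule_format, of n]] .
      then show ?thesis unfolding x_def naP using pbpos[rule_format, of n]
        by (intro nonneg_scale) auto
    qed
    have nax: "na (x n) = 1" for n
      using x_def na_scale[OF na] naP pbpos[rule_format, of n] by simp
    define b :: "real ^ 'n" where "b = (\<chi> i. 1 / na (axis i 1))"
    define K where "K = cbox 0 b"
    have axpos: "0 < na (axis i (1::real))" for i
      by (rule na_pos[OF na]) (simp add: axis_eq_0_iff)
    have xK: "\<forall>n. x n \<in> K"
    proof
      fix n
      have "x n $ i \<le> b $ i" for i
        using na_axis[OF na xnn[of n], of i] nax[of n] axpos[of i]
        by (simp add: b_def le_divide_eq)
      then show "x n \<in> K" using xnn[of n] by (simp add: K_def mem_box_cart nonneg_def)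
    qed
    have Knn: "K \<subseteq> nonneg" by (auto simp: K_def mem_box_cart nonneg_def)
    have B: "\<forall>x' l'. {(y, l). asym_eig T na y l} = {(x', l')} \<and> x' \<in> posv \<and> 0 < l'
                \<longrightarrow> x \<longlonglongrightarrow> x' \<and> l' = L"
    proof (intro allI impI, elim conjE)
      fix x' l' assume U: "{(y, l). asym_eig T na y l} = {(x', l')}"
      have uq: "y = x' \<and> l = l'" if "asym_eig T na y l" for y l
      proof -
        have "(y, l) \<in> {(y, l). asym_eig T na y l}" using that by simp
        then show ?thesis using U by simp
      qed
      have sub: "l = x' \<and> L = l'" if r: "strict_mono r" and l: "(x \<circ> r) \<longlonglongrightarrow> l" for r l
      proof -
        have "l \<in> K"
          by (rule Lim_in_closed_set[OF _ _ _ l]) (use xK in \<open>auto simp: K_def\<close>)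
        then have "l \<in> nonneg" using Knn by auto
        then show ?thesis using uq p2[OF _ r l] by blast
      qed
      have cK: "compact K" by (simp add: K_def)
      have conv: "x \<longlonglongrightarrow> x'"
        by (rule conv_subseq[OF xK cK]) (use sub in blast)
      obtain l r where "l \<in> K" "strict_mono r" "(x \<circ> r) \<longlonglongrightarrow> l"
        using seq_compactE[OF compact_imp_seq_compact[OF cK] xK] by blast
      then have "l' = L" using sub by blast
      then show "x \<longlonglongrightarrow> x' \<and> l' = L" using conv by blast
    qed
    show "let x = (\<lambda>n. (1 / na (P (pb n))) *\<^sub>R P (pb n)) in
           (\<forall>xinf. xinf \<in> nonneg \<and> (\<exists>r. strict_mono r \<and> (x \<circ> r) \<longlonglongrightarrow> xinf)
                \<longrightarrow> asym_eig T na xinf L) \<and>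
           (\<forall>x' l'. {(y, l). asym_eig T na y l} = {(x', l')} \<and> x' \<in> posv \<and> 0 < l'
                \<longrightarrow> x \<longlonglongrightarrow> x' \<and> l' = L)"
      unfolding Let_def x_def[symmetric] using A B by blast
  qed
  show ?thesis using L0 Llim main by blast
qed

end
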